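(* Let $\varepsilon>0$, $\delta\in(0,1)$, $p=1-e^{-\varepsilon}$ and $k=\left\lceil\frac{1}{\varepsilon}\ln\left(\frac{e^{\varepsilon}+2\delta-1}{(e^{\varepsilon}+1)\delta}\right)\right\rceil$. Let $Q$ be a finite set of partitions, and consider databases $D$ in which each user is associated with at most one partition $q\in Q$. For $q\in Q$ let $c_q(D)$ be the number of users in $D$ associated with $q$, and let $Q_D=\{q\in Q: c_q(D)>0\}$. Let $(X_q)_{q\in Q}$ be i.i.d. random variables with the $k$-truncated symmetric geometric distribution with parameter $p$, and set $\hat c_q(D)=c_q(D)+X_q$. Then the mechanism that outputs the set $\{(q,\hat c_q(D)): q\in Q_D \text{ and } \hat c_q(D)>k\}$ is $(\varepsilon,\delta)$-differentially private.
   Context: For $p\in(0,1)$ and an integer $k\ge1$, the $k$-truncated symmetric geometric distribution with parameter $p$ is the distribution on $\mathbb{Z}$ with $\Pr[X=x]=c\,(1-p)^{|x|}$ for $x\in[-k,k]\cap\mathbb{Z}$ and $0$ otherwise, where $c=\frac{p}{1+(1-p)-2(1-p)^{k+1}}$. A randomized mechanism $\mathcal{M}$ is $(\varepsilon,\delta)$-differentially private if for any databases $D,D'$ where $D'$ is obtained from $D$ by adding or removing one user, and all sets $S$ of outputs, $\Pr[\mathcal{M}(D)\in S]\le e^{\varepsilon}\Pr[\mathcal{M}(D')\in S]+\delta$. *)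

theory Defs
  imports "HOL-Probability.Probability"
begin

text \<open>Normalising constant of the k-truncated symmetric geometric distribution.\<close>
definition tsg_const :: "real \<Rightarrow> nat \<Rightarrow> real" where
  "tsg_const p k = p / (1 + (1 - p) - 2 * (1 - p) ^ (k + 1))"

definition trunc_sym_geom :: "real \<Rightarrow> nat \<Rightarrow> int pmf" where
  "trunc_sym_geom p k =
     embed_pmf (\<lambda>x. if \<bar>x\<bar> \<le> int k then tsg_const p k * (1 - p) ^ nat \<bar>x\<bar> else 0)"

text \<open>Databases: multisets of users; each user u is associated with at most one
  partition, given by assoc u (None = no partition).\<close>
definition count_part :: "('u \<Rightarrow> 'q option) \<Rightarrow> 'q \<Rightarrow> 'u multiset \<Rightarrow> int" where
  "count_part assoc q D = int (size (filter_mset (\<lambda>u. assoc u = Some q) D))"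

definition neighbours :: "'u multiset \<Rightarrow> 'u multiset \<Rightarrow> bool" where
  "neighbours D D' \<longleftrightarrow> (\<exists>u. D' = add_mset u D) \<or> (\<exists>u. D = add_mset u D')"

definition diff_private :: "real \<Rightarrow> real \<Rightarrow> ('d \<Rightarrow> 'o pmf) \<Rightarrow> ('d \<Rightarrow> 'd \<Rightarrow> bool) \<Rightarrow> bool" where
  "diff_private \<epsilon> \<delta> M nb \<longleftrightarrow>
     (\<forall>D D' S. nb D D' \<longrightarrow>
        measure_pmf.prob (M D) S \<le> exp \<epsilon> * measure_pmf.prob (M D') S + \<delta>)"

definition partition_mech ::
  "'q set \<Rightarrow> ('u \<Rightarrow> 'q option) \<Rightarrow> real \<Rightarrow> nat \<Rightarrow> 'u multiset \<Rightarrow> ('q \<times> int) set pmf" where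
  "partition_mech Q assoc p k D =
     map_pmf (\<lambda>X. {(q, count_part assoc q D + X q) | q.
                     q \<in> Q \<and> count_part assoc q D > 0 \<and> count_part assoc q D + X q > int k})
             (Pi_pmf Q 0 (\<lambda>_. trunc_sym_geom p k))"

end

theory Submission
  imports Defs
begin

lemma tsg_sum_aux:
  fixes r :: real
  shows "(\<Sum>x\<in>{-int k..int k}. r ^ nat \<bar>x\<bar>) = 1 + 2 * (\<Sum>i\<in>{1..k}. r ^ i)"
proof (induction k)
  case 0 then show ?case by simp
next
  case (Suc k)
  have e: "{-int (Suc k)..int (Suc k)} = insert (int k + 1) (insert (-(int k+1)) {-int k..int k})"
    by auto
  have "(\<Sum>x\<in>{-int (Suc k)..int (Suc k)}. r ^ nat \<bar>x\<bar>) =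
        r ^ Suc k + r ^ Suc k + (\<Sum>x\<in>{-int k..int k}. r ^ nat \<bar>x\<bar>)"
    unfolding e by (simp add: nat_add_distrib)
  then show ?case using Suc by simp
qed

lemma geom_aux:
  fixes r :: real
  shows "(\<Sum>i\<in>{1..k}. r ^ i) * (1 - r) = r - r ^ (k+1)"
proof (induction k)
  case (Suc k)
  have "(\<Sum>i\<in>{1..Suc k}. r ^ i) = (\<Sum>i\<in>{1..k}. r ^ i) + r ^ Suc k" by simp
  have "(\<Sum>i\<in>{1..Suc k}. r ^ i) * (1 - r) = (\<Sum>i\<in>{1..k}. r ^ i) * (1 - r) + r ^ Suc k * (1 - r)"
    by (simp add: \<open>(\<Sum>i\<in>{1..Suc k}. r ^ i) = (\<Sum>i\<in>{1..k}. r ^ i) + r ^ Suc k\<close> ring_distribs)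
  also have "\<dots> = r - r ^ (Suc k + 1)" using Suc by (simp add: algebra_simps)
  finally show ?case .
qed simp

lemma tsg_denom_pos:
  fixes p :: real
  assumes "0 < p" "p < 1"
  shows "1 + (1 - p) - 2 * (1 - p) ^ (k + 1) > 0"
proof -
  have "(1-p) ^ (k+1) \<le> (1-p)^1" using assms by (intro power_decreasing) auto
  then have "(1-p) ^ (k+1) \<le> 1-p" by simp
  then show ?thesis using assms by linarith
qed

lemma tsg_const_pos:
  assumes "0 < p" "p < 1"
  shows "tsg_const p k > 0"
  using tsg_denom_pos[OF assms, of k] assms unfolding tsg_const_def by simp

lemma tsg_total:
  fixes p :: real
  assumes "0 < p" "p < 1"
  shows "(\<Sum>x\<in>{-int k..int k}. tsg_const p k * (1 - p) ^ nat \<bar>x\<bar>) = 1"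
proof -
  define r where "r = 1 - p"
  have r: "0 < r" "r < 1" using assms by (auto simp: r_def)
  define sg where "sg = (\<Sum>i\<in>{1..k}. r ^ i)"
  have s: "sg * p = r - r^(k+1)" using geom_aux[of r k] by (simp add: sg_def r_def)
  have d: "1 + r - 2 * r^(k+1) > 0" using tsg_denom_pos[OF assms, of k] by (simp add: r_def)
  have "(\<Sum>x\<in>{-int k..int k}. tsg_const p k * (1 - p) ^ nat \<bar>x\<bar>) = tsg_const p k * (1 + 2 * sg)"
    by (simp add: sum_distrib_left[symmetric] tsg_sum_aux sg_def r_def)
  also have "\<dots> = p * (1 + 2 * sg) / (1 + r - 2 * r^(k+1))"
    by (simp add: tsg_const_def r_def)
  finally have eq: "(\<Sum>x\<in>{-int k..int k}. tsg_const p k * (1 - p) ^ nat \<bar>x\<bar>) = p * (1 + 2 * sg) / (1 + r - 2 * r^(k+1))" .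
  have "p * (1 + 2 * sg) = 1 + r - 2 * r^(k+1)" using s by (simp add: r_def algebra_simps)
  then show ?thesis using d eq by simp
qed

lemma pmf_tsg:
  assumes "0 < p" "p < 1"
  shows "pmf (trunc_sym_geom p k) x = (if \<bar>x\<bar> \<le> int k then tsg_const p k * (1 - p) ^ nat \<bar>x\<bar> else 0)"
  unfolding trunc_sym_geom_def
proof (rule pmf_embed_pmf)
  show "\<And>x. 0 \<le> (if \<bar>x\<bar> \<le> int k then tsg_const p k * (1 - p) ^ nat \<bar>x\<bar> else 0)"
    using tsg_const_pos[OF assms, of k] assms by auto
  have "(\<integral>\<^sup>+ x. ennreal (if \<bar>x\<bar> \<le> int k then tsg_const p k * (1 - p) ^ nat \<bar>x\<bar> else 0) \<partial>count_space UNIV)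
     = (\<Sum>x\<in>{-int k..int k}. ennreal (if \<bar>x\<bar> \<le> int k then tsg_const p k * (1 - p) ^ nat \<bar>x\<bar> else 0))"
    by (rule nn_integral_count_space') auto
  also have "\<dots> = ennreal (\<Sum>x\<in>{-int k..int k}. tsg_const p k * (1 - p) ^ nat \<bar>x\<bar>)"
    using tsg_const_pos[OF assms, of k] assms
    by (subst sum_ennreal) (auto intro!: sum.cong arg_cong[where f=ennreal])
  also have "\<dots> = 1" using tsg_total[OF assms] by simp
  finally show "(\<integral>\<^sup>+ x. ennreal (if \<bar>x\<bar> \<le> int k then tsg_const p k * (1 - p) ^ nat \<bar>x\<bar> else 0) \<partial>count_space UNIV) = 1" .
qed


lemma close_pointwise:
  fixes p p' :: "'a pmf"
  assumes pt: "\<And>x. x \<notin> B \<Longrightarrow> pmf p x \<le> c * pmf p' x" and c: "c \<ge> 0"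
    and bad: "measure_pmf.prob p B \<le> d"
  shows "measure_pmf.prob p A \<le> c * measure_pmf.prob p' A + d"
proof -
  have "measure_pmf.prob p A \<le> measure_pmf.prob p ((A - B) \<union> B)"
    by (intro measure_pmf.finite_measure_mono) auto
  also have "\<dots> \<le> measure_pmf.prob p (A - B) + measure_pmf.prob p B"
    by (rule measure_subadditive) auto
  also have "measure_pmf.prob p (A - B) = infsetsum (pmf p) (A - B)"
    by (rule measure_pmf_conv_infsetsum)
  also have "\<dots> \<le> infsetsum (\<lambda>x. c * pmf p' x) (A - B)"
    using pt by (intro infsetsum_mono) (auto intro: abs_summable_on_cmult_right)
  also have "\<dots> = c * infsetsum (pmf p') (A - B)"
    by (rule infsetsum_cmult_right) auto
  also have "infsetsum (pmf p') (A - B) = measure_pmf.prob p' (A - B)"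
    by (rule measure_pmf_conv_infsetsum[symmetric])
  also have "\<dots> \<le> measure_pmf.prob p' A"
    by (intro measure_pmf.finite_measure_mono) auto
  finally show ?thesis using c bad by (smt (verit) mult_left_mono)
qed

lemma exp_pow_step:
  fixes e :: real and a b :: nat
  assumes "e > 0" "b \<le> a + 1"
  shows "exp (-e) ^ a \<le> exp e * exp (-e) ^ b"
proof -
  have "exp (-e) ^ (a+1) \<le> exp (-e) ^ b"
    using assms by (intro power_decreasing) auto
  moreover have "exp e * exp (-e) ^ (a+1) = exp (-e) ^ a"
    by (simp add: exp_minus field_simps)
  ultimately show ?thesis by (smt (verit) exp_gt_zero mult_left_mono)
qed

definition gfun :: "real \<Rightarrow> real \<Rightarrow> nat \<Rightarrow> int \<Rightarrow> real" where
  "gfun C e k x = (if \<bar>x\<bar> \<le> int k then C * exp (-e) ^ nat \<bar>x\<bar> else 0)"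

lemma gfun_step1:
  assumes "e > 0" "C \<ge> 0" "x \<noteq> - int k"
  shows "gfun C e k x \<le> exp e * gfun C e k (x - 1)"
proof (cases "\<bar>x\<bar> \<le> int k")
  case True
  then have t: "\<bar>x - 1\<bar> \<le> int k" using assms by auto
  have "exp (-e) ^ nat \<bar>x\<bar> \<le> exp e * exp (-e) ^ nat \<bar>x - 1\<bar>"
    using assms by (intro exp_pow_step) auto
  then have "C * exp (-e) ^ nat \<bar>x\<bar> \<le> C * (exp e * exp (-e) ^ nat \<bar>x - 1\<bar>)"
    using assms by (intro mult_left_mono) auto
  then show ?thesis using True t by (simp add: gfun_def mult_ac)
next
  case False
  then show ?thesis using assms by (auto simp: gfun_def)
qed

lemma gfun_step2:
  assumes "e > 0" "C \<ge> 0" "x \<noteq> int k + 1"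
  shows "gfun C e k (x - 1) \<le> exp e * gfun C e k x"
proof (cases "\<bar>x - 1\<bar> \<le> int k")
  case True
  then have t: "\<bar>x\<bar> \<le> int k" using assms by auto
  have "exp (-e) ^ nat \<bar>x - 1\<bar> \<le> exp e * exp (-e) ^ nat \<bar>x\<bar>"
    using assms by (intro exp_pow_step) auto
  then have "C * exp (-e) ^ nat \<bar>x - 1\<bar> \<le> C * (exp e * exp (-e) ^ nat \<bar>x\<bar>)"
    using assms by (intro mult_left_mono) auto
  then show ?thesis using True t by (simp add: gfun_def mult_ac)
next
  case False
  then show ?thesis using assms by (auto simp: gfun_def)
qed


definition Fm :: "'q set \<Rightarrow> nat \<Rightarrow> ('q \<Rightarrow> int) \<Rightarrow> ('q \<Rightarrow> int) \<Rightarrow> ('q \<times> int) set" where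
  "Fm Q k c X = {(q, c q + X q) | q. q \<in> Q \<and> c q > 0 \<and> c q + X q > int k}"

definition shiftf :: "'q \<Rightarrow> ('q \<Rightarrow> int) \<Rightarrow> ('q \<Rightarrow> int)" where
  "shiftf q0 X = X(q0 := X q0 + 1)"

lemma Fm_shift:
  assumes "c q0 \<ge> 1"
  shows "Fm Q k (c(q0 := c q0 + 1)) X = Fm Q k c (shiftf q0 X)"
  using assms unfolding Fm_def shiftf_def
  by (auto; metis add.assoc add.commute)

lemma Fm_zero:
  assumes "c q0 = 0" "\<not> (1 + X q0 > int k)"
  shows "Fm Q k (c(q0 := 1)) X = Fm Q k c X"
  using assms unfolding Fm_def by auto (metis less_irrefl)

lemma inj_shiftf: "inj (shiftf q0)"
  by (rule inj_on_inverseI[where g="\<lambda>X. X(q0 := X q0 - 1)"]) (auto simp: shiftf_def)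

lemma pmf_map_shiftf:
  "pmf (map_pmf (shiftf q0) M) X = pmf M (X(q0 := X q0 - 1))"
proof -
  have "X = shiftf q0 (X(q0 := X q0 - 1))" by (auto simp: shiftf_def)
  then have "pmf (map_pmf (shiftf q0) M) X = pmf (map_pmf (shiftf q0) M) (shiftf q0 (X(q0 := X q0 - 1)))"
    by simp
  also have "\<dots> = pmf M (X(q0 := X q0 - 1))" by (rule pmf_map_inj'[OF inj_shiftf])
  finally show ?thesis .
qed

lemma pmf_Pi_split:
  assumes "finite Q" "q0 \<in> Q"
  shows "pmf (Pi_pmf Q 0 (\<lambda>_. \<mu>)) X =
    (if (\<forall>x. x \<notin> Q \<longrightarrow> X x = 0) then pmf \<mu> (X q0) * (\<Prod>q\<in>Q-{q0}. pmf \<mu> (X q)) else 0)"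
  using assms by (auto simp: pmf_Pi prod.remove)

lemma prob_component:
  assumes "finite Q" "q0 \<in> Q"
  shows "measure_pmf.prob (Pi_pmf Q 0 (\<lambda>_. \<mu>)) {X. P (X q0)} = measure_pmf.prob \<mu> {x. P x}"
proof -
  have "measure_pmf.prob (Pi_pmf Q 0 (\<lambda>_. \<mu>)) {X. P (X q0)} =
        measure_pmf.prob (map_pmf (\<lambda>X. X q0) (Pi_pmf Q 0 (\<lambda>_. \<mu>))) {x. P x}"
    by simp
  also have "map_pmf (\<lambda>X. X q0) (Pi_pmf Q 0 (\<lambda>_. \<mu>)) = \<mu>"
    using Pi_pmf_component[OF assms(1), of q0 0 "\<lambda>_. \<mu>"] assms by simp
  finally show ?thesis .
qed

lemma core_shift:
  fixes Q :: "'q set" and \<mu> :: "int pmf"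
  assumes Q: "finite Q" "q0 \<in> Q" and e: "e > 0" and C: "C \<ge> 0"
    and mu: "\<And>x. pmf \<mu> x = gfun C e k x"
    and tail: "C * exp (-e) ^ k \<le> \<delta>"
  defines "PP \<equiv> Pi_pmf Q 0 (\<lambda>_. \<mu>)"
  shows "measure_pmf.prob PP A \<le> exp e * measure_pmf.prob (map_pmf (shiftf q0) PP) A + \<delta>"
    and "measure_pmf.prob (map_pmf (shiftf q0) PP) A \<le> exp e * measure_pmf.prob PP A + \<delta>"
proof -
  have gk: "gfun C e k (int k) = C * exp (-e) ^ k" "gfun C e k (- int k) = C * exp (-e) ^ k"
    by (auto simp: gfun_def)
  have gnn: "\<And>x. gfun C e k x \<ge> 0" using C by (auto simp: gfun_def)
  have ext: "(\<forall>x. x \<notin> Q \<longrightarrow> (X(q0 := X q0 - 1)) x = 0) \<longleftrightarrow> (\<forall>x. x \<notin> Q \<longrightarrow> X x = 0)" for X :: "'q \<Rightarrow> int"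
    using Q by auto
  have rest: "(\<Prod>q\<in>Q-{q0}. pmf \<mu> ((X(q0 := X q0 - 1)) q)) = (\<Prod>q\<in>Q-{q0}. pmf \<mu> (X q))" for X :: "'q \<Rightarrow> int"
    by (intro prod.cong) auto
  have rnn: "(\<Prod>q\<in>Q-{q0}. pmf \<mu> (X q)) \<ge> 0" for X :: "'q \<Rightarrow> int"
    by (intro prod_nonneg) auto
  have pm: "pmf (map_pmf (shiftf q0) PP) X =
     (if (\<forall>x. x \<notin> Q \<longrightarrow> X x = 0) then gfun C e k (X q0 - 1) * (\<Prod>q\<in>Q-{q0}. pmf \<mu> (X q)) else 0)" for X
    unfolding pmf_map_shiftf PP_def pmf_Pi_split[OF Q] ext rest by (auto simp: mu)
  have pp: "pmf PP X =
     (if (\<forall>x. x \<notin> Q \<longrightarrow> X x = 0) then gfun C e k (X q0) * (\<Prod>q\<in>Q-{q0}. pmf \<mu> (X q)) else 0)" for X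
    unfolding PP_def pmf_Pi_split[OF Q] by (auto simp: mu)
  show "measure_pmf.prob PP A \<le> exp e * measure_pmf.prob (map_pmf (shiftf q0) PP) A + \<delta>"
  proof (rule close_pointwise[where B="{X. X q0 = - int k}"])
    fix X :: "'q \<Rightarrow> int" assume "X \<notin> {X. X q0 = - int k}"
    then have "gfun C e k (X q0) \<le> exp e * gfun C e k (X q0 - 1)"
      using gfun_step1[OF e C] by auto
    then have "gfun C e k (X q0) * (\<Prod>q\<in>Q-{q0}. pmf \<mu> (X q)) \<le> exp e * gfun C e k (X q0 - 1) * (\<Prod>q\<in>Q-{q0}. pmf \<mu> (X q))"
      using rnn by (intro mult_right_mono) auto
    then show "pmf PP X \<le> exp e * pmf (map_pmf (shiftf q0) PP) X"
      unfolding pp pm by (auto simp: mult_ac)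
  next
    show "exp e \<ge> 0" by simp
    have "measure_pmf.prob PP {X. X q0 = - int k} = measure_pmf.prob \<mu> {x. x = - int k}"
      unfolding PP_def by (rule prob_component[OF Q])
    also have "\<dots> = C * exp (-e) ^ k" using gk by (simp add: measure_pmf_single mu)
    finally show "measure_pmf.prob PP {X. X q0 = - int k} \<le> \<delta>" using tail by simp
  qed
  show "measure_pmf.prob (map_pmf (shiftf q0) PP) A \<le> exp e * measure_pmf.prob PP A + \<delta>"
  proof (rule close_pointwise[where B="{X. X q0 = int k + 1}"])
    fix X :: "'q \<Rightarrow> int" assume "X \<notin> {X. X q0 = int k + 1}"
    then have "gfun C e k (X q0 - 1) \<le> exp e * gfun C e k (X q0)"
      using gfun_step2[OF e C] by auto
    then have "gfun C e k (X q0 - 1) * (\<Prod>q\<in>Q-{q0}. pmf \<mu> (X q)) \<le> exp e * gfun C e k (X q0) * (\<Prod>q\<in>Q-{q0}. pmf \<mu> (X q))"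
      using rnn by (intro mult_right_mono) auto
    then show "pmf (map_pmf (shiftf q0) PP) X \<le> exp e * pmf PP X"
      unfolding pp pm by (auto simp: mult_ac)
  next
    show "exp e \<ge> 0" by simp
    have "measure_pmf.prob (map_pmf (shiftf q0) PP) {X. X q0 = int k + 1} = measure_pmf.prob PP {X. X q0 + 1 = int k + 1}"
      by (simp add: shiftf_def vimage_def)
    also have "\<dots> = measure_pmf.prob \<mu> {x. x + 1 = int k + 1}"
      unfolding PP_def by (rule prob_component[OF Q])
    also have "{x. x + 1 = int k + 1} = {int k}" by auto
    also have "measure_pmf.prob \<mu> {int k} = C * exp (-e) ^ k" using gk by (simp add: measure_pmf_single mu)
    finally show "measure_pmf.prob (map_pmf (shiftf q0) PP) {X. X q0 = int k + 1} \<le> \<delta>" using tail by simp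
  qed
qed


lemma tail_bound:
  fixes \<epsilon> \<delta> :: real
  assumes e: "\<epsilon> > 0" and d: "0 < \<delta>" "\<delta> < 1"
    and k: "k = nat \<lceil>(1 / \<epsilon>) * ln ((exp \<epsilon> + 2 * \<delta> - 1) / ((exp \<epsilon> + 1) * \<delta>))\<rceil>"
  shows "tsg_const (1 - exp (- \<epsilon>)) k * exp (- \<epsilon>) ^ k \<le> \<delta>"
proof -
  define E where "E = exp \<epsilon>"
  have E1: "E > 1" using e by (simp add: E_def)
  define A where "A = (E + 2 * \<delta> - 1) / ((E + 1) * \<delta>)"
  have A0: "A > 0" using E1 d by (simp add: A_def)
  define r where "r = exp (- \<epsilon>)"
  have rE: "r = 1 / E" by (simp add: r_def E_def exp_minus field_simps)
  define t where "t = r ^ k"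
  have t: "t = exp (- (\<epsilon> * real k))" by (simp add: t_def r_def exp_of_nat_mult[symmetric] mult_ac)
  have "real k \<ge> (1 / \<epsilon>) * ln A" unfolding k A_def E_def by linarith
  then have "\<epsilon> * real k \<ge> ln A" using e by (simp add: field_simps)
  then have "t \<le> exp (- ln A)" unfolding t by simp
  also have "\<dots> = 1 / A" using A0 by (simp add: exp_minus inverse_eq_divide)
  finally have tA: "t \<le> 1 / A" .
  have t0: "t \<ge> 0" by (simp add: t_def r_def)
  have p: "1 - exp (-\<epsilon>) = 1 - r" by (simp add: r_def)
  have r0: "r > 0" by (simp add: r_def)
  have r1: "r < 1" using e by (simp add: r_def)
  have pr: "0 < 1 - r" "1 - r < 1" using r0 r1 by auto
  have Dpos: "1 + (1 - (1 - r)) - 2 * (1 - (1 - r)) ^ (k + 1) > 0"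
    using tsg_denom_pos[OF pr, of k] .
  have Deq: "1 + (1 - (1 - r)) - 2 * (1 - (1 - r)) ^ (k + 1) = 1 + r - 2 * r * t"
    by (simp add: t_def)
  have key: "(1 - r + 2 * r * \<delta>) / A = \<delta> * (1 + r)"
  proof -
    have nz: "E + 2 * \<delta> - 1 > 0" using E1 d by simp
    have "1 - r + 2 * r * \<delta> = (E + 2 * \<delta> - 1) / E" unfolding rE using E1 by (simp add: field_simps)
    then have "(1 - r + 2 * r * \<delta>) / A = (E + 2 * \<delta> - 1) / E * ((E + 1) * \<delta>) / (E + 2 * \<delta> - 1)"
      by (simp add: A_def)
    also have "\<dots> = (E + 1) * \<delta> / E" using nz E1 by (simp add: divide_simps)
    also have "\<dots> = \<delta> * (1 + r)" unfolding rE using E1 by (simp add: field_simps)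
    finally show ?thesis .
  qed
  have nn: "1 - r + 2 * r * \<delta> \<ge> 0" using pr d rE E1 by simp
  have "t * (1 - r + 2 * r * \<delta>) \<le> (1 / A) * (1 - r + 2 * r * \<delta>)"
    using tA nn by (rule mult_right_mono)
  also have "\<dots> = \<delta> * (1 + r)" using key by simp
  finally have main: "(1 - r) * t \<le> \<delta> * (1 + r - 2 * r * t)" by (simp add: algebra_simps)
  have "tsg_const (1 - exp (- \<epsilon>)) k * exp (- \<epsilon>) ^ k = (1 - r) * t / (1 + r - 2 * r * t)"
    unfolding tsg_const_def p Deq[symmetric] by (simp add: t_def r_def)
  also have "\<dots> \<le> \<delta>"
  proof -
    have "1 + r - 2 * r * t > 0" using Dpos unfolding Deq .
    then show ?thesis using main by (simp add: divide_le_eq mult.commute)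
  qed
  finally show ?thesis .
qed


lemma core_zero:
  fixes Q :: "'q set" and \<mu> :: "int pmf" and c :: "'q \<Rightarrow> int"
  assumes Q: "finite Q" "q0 \<in> Q" and e: "e > 0" and C: "C \<ge> 0"
    and mu: "\<And>x. pmf \<mu> x = gfun C e k x"
    and tail: "C * exp (-e) ^ k \<le> \<delta>" and c0: "c q0 = 0"
  defines "PP \<equiv> Pi_pmf Q 0 (\<lambda>_. \<mu>)"
  shows "measure_pmf.prob (map_pmf (Fm Q k c) PP) S \<le> exp e * measure_pmf.prob (map_pmf (Fm Q k (c(q0 := 1))) PP) S + \<delta>"
    and "measure_pmf.prob (map_pmf (Fm Q k (c(q0 := 1))) PP) S \<le> exp e * measure_pmf.prob (map_pmf (Fm Q k c) PP) S + \<delta>"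
proof -
  define B where "B = {X :: 'q \<Rightarrow> int. 1 + X q0 > int k}"
  have "measure_pmf.prob PP B = measure_pmf.prob \<mu> {x. 1 + x > int k}"
    unfolding PP_def B_def by (rule prob_component[OF Q])
  also have "\<dots> = measure_pmf.prob \<mu> ({x. 1 + x > int k} \<inter> set_pmf \<mu>)"
    by (rule measure_Int_set_pmf[symmetric])
  also have "\<dots> \<le> measure_pmf.prob \<mu> {int k}"
  proof (intro measure_pmf.finite_measure_mono)
    show "{x. 1 + x > int k} \<inter> set_pmf \<mu> \<subseteq> {int k}"
    proof
      fix x assume x: "x \<in> {x. 1 + x > int k} \<inter> set_pmf \<mu>"
      then have "pmf \<mu> x \<noteq> 0" by (simp add: set_pmf_iff)
      then have "\<bar>x\<bar> \<le> int k" by (simp add: mu gfun_def split: if_splits)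
      then show "x \<in> {int k}" using x by auto
    qed
  qed auto
  also have "\<dots> = C * exp (-e) ^ k" by (simp add: measure_pmf_single mu gfun_def)
  finally have PB: "measure_pmf.prob PP B \<le> \<delta>" using tail by simp
  have d0: "\<delta> \<ge> 0" using tail C by (smt (verit) exp_gt_zero zero_le_power mult_nonneg_nonneg)
  have eq: "Fm Q k (c(q0 := 1)) X = Fm Q k c X" if "X \<notin> B" for X
    by (rule Fm_zero) (use c0 that in \<open>auto simp: B_def\<close>)
  have gen: "measure_pmf.prob PP (F1 -` S) \<le> exp e * measure_pmf.prob PP (F2 -` S) + \<delta>"
    if "\<And>X. X \<notin> B \<Longrightarrow> F1 X = F2 X" for F1 F2 :: "('q \<Rightarrow> int) \<Rightarrow> ('q \<times> int) set"
  proof -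
    have "measure_pmf.prob PP (F1 -` S) \<le> measure_pmf.prob PP ((F2 -` S) \<union> B)"
      using that by (intro measure_pmf.finite_measure_mono) auto
    also have "\<dots> \<le> measure_pmf.prob PP (F2 -` S) + measure_pmf.prob PP B"
      by (rule measure_subadditive) auto
    finally have a: "measure_pmf.prob PP (F1 -` S) \<le> measure_pmf.prob PP (F2 -` S) + measure_pmf.prob PP B" .
    have "1 * measure_pmf.prob PP (F2 -` S) \<le> exp e * measure_pmf.prob PP (F2 -` S)"
      using e by (intro mult_right_mono) auto
    then show ?thesis using a PB by linarith
  qed
  show "measure_pmf.prob (map_pmf (Fm Q k c) PP) S \<le> exp e * measure_pmf.prob (map_pmf (Fm Q k (c(q0 := 1))) PP) S + \<delta>"
    using gen[of "Fm Q k c" "Fm Q k (c(q0 := 1))"] eq by simp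
  show "measure_pmf.prob (map_pmf (Fm Q k (c(q0 := 1))) PP) S \<le> exp e * measure_pmf.prob (map_pmf (Fm Q k c) PP) S + \<delta>"
    using gen[of "Fm Q k (c(q0 := 1))" "Fm Q k c"] eq by simp
qed


lemma count_part_add:
  "(\<lambda>q. count_part assoc q (add_mset u D)) =
   (case assoc u of None \<Rightarrow> (\<lambda>q. count_part assoc q D)
    | Some q0 \<Rightarrow> (\<lambda>q. count_part assoc q D)(q0 := count_part assoc q0 D + 1))"
  by (cases "assoc u") (auto simp: count_part_def fun_eq_iff)

lemma count_part_nonneg: "count_part assoc q D \<ge> 0"
  by (simp add: count_part_def)

theorem theorem6:
  fixes \<epsilon> \<delta> :: real and Q :: "'q set" and assoc :: "'u \<Rightarrow> 'q option"
  assumes "\<epsilon> > 0" and "0 < \<delta>" and "\<delta> < 1"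
    and "finite Q"
    and "\<And>u q. assoc u = Some q \<Longrightarrow> q \<in> Q"
  shows "let p = 1 - exp (- \<epsilon>);
             k = nat \<lceil>(1 / \<epsilon>) * ln ((exp \<epsilon> + 2 * \<delta> - 1) / ((exp \<epsilon> + 1) * \<delta>))\<rceil>
         in diff_private \<epsilon> \<delta> (partition_mech Q assoc p k) neighbours"
proof -
  note e = assms(1) and d = assms(2,3) and Q = assms(4) and aQ = assms(5)
  define p where "p = 1 - exp (- \<epsilon>)"
  define k where "k = nat \<lceil>(1 / \<epsilon>) * ln ((exp \<epsilon> + 2 * \<delta> - 1) / ((exp \<epsilon> + 1) * \<delta>))\<rceil>"
  have p0: "0 < p" "p < 1" using e by (auto simp: p_def)
  define C where "C = tsg_const p k"
  have C0: "C \<ge> 0" using tsg_const_pos[OF p0, of k] by (simp add: C_def)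
  define \<mu> where "\<mu> = trunc_sym_geom p k"
  have mu: "pmf \<mu> x = gfun C \<epsilon> k x" for x
    unfolding \<mu>_def pmf_tsg[OF p0] gfun_def C_def by (simp add: p_def)
  have tail: "C * exp (-\<epsilon>) ^ k \<le> \<delta>"
    unfolding C_def p_def by (rule tail_bound[OF e d k_def])
  have d0: "\<delta> \<ge> 0" using d by simp
  define PP where "PP = Pi_pmf Q 0 (\<lambda>_. \<mu>)"
  define cnt where "cnt D = (\<lambda>q. count_part assoc q D)" for D
  have mech: "partition_mech Q assoc p k D = map_pmf (Fm Q k (cnt D)) PP" for D
    unfolding partition_mech_def Fm_def PP_def \<mu>_def cnt_def by simp
  have triv: "a \<le> exp \<epsilon> * a + \<delta>" if "a \<ge> 0" for a :: real
  proof -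
    have "1 * a \<le> exp \<epsilon> * a" using e that by (intro mult_right_mono) auto
    then show ?thesis using d0 by simp
  qed
  have both: "measure_pmf.prob (partition_mech Q assoc p k D) S \<le> exp \<epsilon> * measure_pmf.prob (partition_mech Q assoc p k (add_mset u D)) S + \<delta>
      \<and> measure_pmf.prob (partition_mech Q assoc p k (add_mset u D)) S \<le> exp \<epsilon> * measure_pmf.prob (partition_mech Q assoc p k D) S + \<delta>"
    for D u S
  proof (cases "assoc u")
    case None
    then have "cnt (add_mset u D) = cnt D" using count_part_add[of assoc u D] by (simp add: cnt_def)
    then show ?thesis unfolding mech using triv by simp
  next
    case (Some q0)
    then have q0: "q0 \<in> Q" using aQ by blast
    have c2: "cnt (add_mset u D) = (cnt D)(q0 := cnt D q0 + 1)"
      using count_part_add[of assoc u D] Some by (simp add: cnt_def)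
    show ?thesis
    proof (cases "cnt D q0 = 0")
      case True
      then have c2': "cnt (add_mset u D) = (cnt D)(q0 := 1)" using c2 by simp
      show ?thesis unfolding mech c2' PP_def
        using core_zero[where c="cnt D", OF Q q0 e C0 mu tail True] by blast
    next
      case False
      then have ge: "cnt D q0 \<ge> 1" using count_part_nonneg[of assoc q0 D] by (simp add: cnt_def)
      have "Fm Q k (cnt (add_mset u D)) = Fm Q k (cnt D) \<circ> shiftf q0"
        unfolding c2 using Fm_shift[of "cnt D" q0, OF ge] by (auto simp: fun_eq_iff)
      then have m2: "map_pmf (Fm Q k (cnt (add_mset u D))) PP = map_pmf (Fm Q k (cnt D)) (map_pmf (shiftf q0) PP)"
        by (simp add: map_pmf_comp comp_def)
      have m1: "partition_mech Q assoc p k (add_mset u D) = map_pmf (Fm Q k (cnt D)) (map_pmf (shiftf q0) PP)"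
        using mech m2 by simp
      show ?thesis unfolding m1 unfolding mech measure_map_pmf[of "Fm Q k (cnt D)"]
        using core_shift[OF Q q0 e C0 mu tail] unfolding PP_def[symmetric] by blast
    qed
  qed
  have "diff_private \<epsilon> \<delta> (partition_mech Q assoc p k) neighbours"
    unfolding diff_private_def neighbours_def using both by blast
  then show ?thesis unfolding Let_def p_def k_def .
qed

end
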